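(* Let $A$ be an arbitrary endomorphism of $\mathbb{R}^n$. There exist instants $t_0<t_1$ in $\mathbb{R}$ that are conjugate for the system $v''=Av$ if and only if $A$ has real negative eigenvalues.
   Context: Two instants $t_0<t_1$ are conjugate for a second-order linear system in $\mathbb{R}^n$ if there exists a solution $v$ of the system, not identically zero, with $v(t_0)=v(t_1)=0$. *)

theory Defs
  imports "HOL-Analysis.Analysis"
begin

definition is_solution :: "real^'n^'n \<Rightarrow> (real \<Rightarrow> real^'n) \<Rightarrow> bool" where
  "is_solution A v \<longleftrightarrow> (\<exists>v'. \<forall>t. (v has_vector_derivative v' t) (at t) \<and>
                                  (v' has_vector_derivative (A *v v t)) (at t))"

definition conjugate :: "real^'n^'n \<Rightarrow> real \<Rightarrow> real \<Rightarrow> bool" where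
  "conjugate A t0 t1 \<longleftrightarrow> t0 < t1 \<and>
     (\<exists>v. is_solution A v \<and> (\<exists>t. v t \<noteq> 0) \<and> v t0 = 0 \<and> v t1 = 0)"

definition real_eigenvalue :: "real^'n^'n \<Rightarrow> real \<Rightarrow> bool" where
  "real_eigenvalue A l \<longleftrightarrow> (\<exists>x. x \<noteq> 0 \<and> A *v x = l *\<^sub>R x)"

end

theory Submission
  imports Defs "HOL-Computational_Algebra.Fundamental_Theorem_Algebra"
begin


lemma scalar_unique:
  fixes u u' :: "real \<Rightarrow> complex" and r :: complex
  assumes d1: "\<And>t. (u has_vector_derivative u' t) (at t)"
    and d2: "\<And>t. (u' has_vector_derivative r * u t) (at t)"
    and c: "u c = 0" "u' c = 0"
  shows "u t = 0"
proof -
  define E where "E t = u t \<bullet> u t + u' t \<bullet> u' t" for t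
  define E' where "E' t = 2 * (u' t \<bullet> u t) + 2 * ((r * u t) \<bullet> u' t)" for t
  define K where "K = 1 + norm r"
  have dE: "(E has_real_derivative E' t) (at t)" for t
  proof -
    have a: "((\<lambda>t. u t \<bullet> u t) has_vector_derivative (u t \<bullet> u' t + u' t \<bullet> u t)) (at t)"
      by (rule bounded_bilinear.has_vector_derivative[OF bounded_bilinear_inner d1 d1])
    have b: "((\<lambda>t. u' t \<bullet> u' t) has_vector_derivative (u' t \<bullet> (r * u t) + (r * u t) \<bullet> u' t)) (at t)"
      by (rule bounded_bilinear.has_vector_derivative[OF bounded_bilinear_inner d2 d2])
    have "(E has_vector_derivative E' t) (at t)"
      using has_vector_derivative_add[OF a b] unfolding E_def[abs_def] E'_def
      by (simp add: inner_commute)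
    then show ?thesis by (simp add: has_real_derivative_iff_has_vector_derivative)
  qed
  have Enn: "E t \<ge> 0" for t by (simp add: E_def)
  have bnd: "\<bar>E' t\<bar> \<le> K * E t" for t
  proof -
    have "\<bar>E' t\<bar> \<le> 2 * \<bar>u' t \<bullet> u t\<bar> + 2 * \<bar>(r * u t) \<bullet> u' t\<bar>" unfolding E'_def by linarith
    also have "\<dots> \<le> 2 * (norm (u' t) * norm (u t)) + 2 * (norm r * norm (u t) * norm (u' t))"
      by (intro add_mono mult_left_mono order_trans[OF Cauchy_Schwarz_ineq2]) (auto simp: norm_mult)
    also have "\<dots> = 2 * (1 + norm r) * (norm (u t) * norm (u' t))" by (simp add: algebra_simps)
    also have "\<dots> \<le> (1 + norm r) * ((norm (u t))^2 + (norm (u' t))^2)"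
    proof -
      have "2 * (norm (u t) * norm (u' t)) \<le> (norm (u t))^2 + (norm (u' t))^2"
        using sum_squares_bound[of "norm (u t)" "norm (u' t)"] by simp
      then have "(1 + norm r) * (2 * (norm (u t) * norm (u' t))) \<le> (1 + norm r) * ((norm (u t))^2 + (norm (u' t))^2)"
        by (rule mult_left_mono) simp
      then show ?thesis by (simp add: algebra_simps)
    qed
    also have "\<dots> = K * E t" by (simp add: K_def E_def power2_norm_eq_inner)
    finally show ?thesis .
  qed
  have Ec: "E c = 0" using c by (simp add: E_def)
  have "E t = 0"
  proof (cases "c \<le> t")
    case True
    define F where "F s = E s * exp (- K * s)" for s
    have "F c \<ge> F t"
    proof (rule DERIV_nonpos_imp_nonincreasing[OF True])
      fix x
      have "(F has_real_derivative E' x * exp (- K * x) + E x * (exp (- K * x) * (- K))) (at x)"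
        unfolding F_def[abs_def]
        using dE[of x] by (auto intro!: derivative_eq_intros)
      moreover have "E' x * exp (- K * x) + E x * (exp (- K * x) * (- K)) \<le> 0"
      proof -
        have "E' x \<le> K * E x" using bnd[of x] by linarith
        then have "(E' x - K * E x) * exp (- K * x) \<le> 0"
          by (simp add: mult_nonpos_nonneg)
        then show ?thesis by (simp add: algebra_simps)
      qed
      ultimately show "\<exists>y. DERIV F x :> y \<and> y \<le> 0" by blast
    qed
    then have "E t * exp (- K * t) \<le> 0" using Ec by (simp add: F_def)
    then show ?thesis using Enn[of t] by (simp add: mult_le_0_iff)
  next
    case False
    then have le: "t \<le> c" by simp
    define F where "F s = E s * exp (K * s)" for s
    have "F t \<le> F c"
    proof (rule DERIV_nonneg_imp_nondecreasing[OF le])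
      fix x
      have "(F has_real_derivative E' x * exp (K * x) + E x * (exp (K * x) * K)) (at x)"
        unfolding F_def[abs_def]
        using dE[of x] by (auto intro!: derivative_eq_intros)
      moreover have "E' x * exp (K * x) + E x * (exp (K * x) * K) \<ge> 0"
      proof -
        have "E' x + K * E x \<ge> 0" using bnd[of x] by linarith
        then have "(E' x + K * E x) * exp (K * x) \<ge> 0"
          by simp
        then show ?thesis by (simp add: algebra_simps)
      qed
      ultimately show "\<exists>y. DERIV F x :> y \<and> y \<ge> 0" by blast
    qed
    then have "E t * exp (K * t) \<le> 0" using Ec by (simp add: F_def)
    then show ?thesis using Enn[of t] by (simp add: mult_le_0_iff)
  qed
  then show ?thesis unfolding E_def
    by (metis add_nonneg_eq_0_iff inner_eq_zero_iff inner_ge_zero)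
qed



lemma inner_mult_self: "((s::complex) * z) \<bullet> z = Re s * (norm z)^2"
  unfolding cmod_power2 by (simp add: inner_complex_def power2_eq_square algebra_simps)

lemma scalar_conj:
  fixes u u' :: "real \<Rightarrow> complex" and r :: complex
  assumes d1: "\<And>t. (u has_vector_derivative u' t) (at t)"
    and d2: "\<And>t. (u' has_vector_derivative r * u t) (at t)"
    and ab: "a < b" "u a = 0" "u b = 0" and s: "u s \<noteq> 0"
  shows "Im r = 0 \<and> Re r < 0"
proof (rule ccontr)
  assume H: "\<not> (Im r = 0 \<and> Re r < 0)"
  obtain k where k: "Re r + k * Im r \<ge> 0"
  proof (cases "Re r \<ge> 0")
    case True then show ?thesis using that[of 0] by simp
  next
    case False
    then have "Im r \<noteq> 0" using H by auto
    then show ?thesis using that[of "- Re r / Im r"] by simp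
  qed
  define \<sigma> where "\<sigma> = Complex 1 (-k)"
  define g where "g t = (\<sigma> * u' t) \<bullet> u t" for t
  define g' where "g' t = (Re r + k * Im r) * (norm (u t))^2 + (norm (u' t))^2" for t
  have dg: "(g has_real_derivative g' t) (at t)" for t
  proof -
    have d3: "((\<lambda>t. \<sigma> * u' t) has_vector_derivative \<sigma> * (r * u t)) (at t)"
      using bounded_linear.has_vector_derivative[OF bounded_linear_mult_right d2] .
    have "(g has_vector_derivative ((\<sigma> * u' t) \<bullet> u' t + (\<sigma> * (r * u t)) \<bullet> u t)) (at t)"
      unfolding g_def[abs_def]
      by (rule bounded_bilinear.has_vector_derivative[OF bounded_bilinear_inner d3 d1])
    moreover have "(\<sigma> * u' t) \<bullet> u' t + (\<sigma> * (r * u t)) \<bullet> u t = g' t"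
      unfolding g'_def mult.assoc[symmetric] inner_mult_self
      by (simp add: \<sigma>_def algebra_simps)
    ultimately show ?thesis by (simp add: has_real_derivative_iff_has_vector_derivative)
  qed
  have g'nn: "g' t \<ge> 0" for t using k by (simp add: g'_def)
  have mono: "g x \<le> g y" if "x \<le> y" for x y
    using DERIV_nonneg_imp_nondecreasing[OF that] dg g'nn by blast
  have ga: "g a = 0" "g b = 0" using ab by (auto simp: g_def)
  have u'0: "u' c = 0" if "a < c" "c < b" for c
  proof -
    have "g' c = 0"
    proof (rule ccontr)
      assume "g' c \<noteq> 0"
      then have "g' c > 0" using g'nn[of c] by simp
      from DERIV_pos_inc_right[OF dg this] obtain d where d: "d > 0" "\<forall>h>0. h < d \<longrightarrow> g c < g (c + h)" by blast
      define h where "h = min (d/2) (b - c)"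
      have "h > 0" "h < d" using d that by (auto simp: h_def)
      then have "g c < g (c + h)" using d by blast
      moreover have "g (c + h) \<le> g b" by (rule mono) (simp add: h_def)
      moreover have "g a \<le> g c" by (rule mono) (use that in simp)
      ultimately show False using ga by simp
    qed
    then have "(norm (u' c))^2 = 0"
      using k unfolding g'_def by (simp add: add_nonneg_eq_0_iff)
    then show ?thesis by simp
  qed
  define m where "m = (a + b) / 2"
  have am: "a < m" "m < b" using ab by (auto simp: m_def)
  have cont: "continuous_on {a..m} u"
    using d1 by (meson continuous_at_imp_continuous_on has_vector_derivative_continuous)
  have "\<exists>x\<in>{a<..<m}. norm (u m - u a) \<le> norm ((\<lambda>h. h *\<^sub>R u' x) (m - a))"
    by (rule mvt_general[OF am(1) cont]) (use d1 in \<open>auto simp: has_vector_derivative_def\<close>)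
  then obtain x where "a < x" "x < m" "norm (u m - u a) \<le> norm ((m - a) *\<^sub>R u' x)" by auto
  moreover have "u' x = 0" using u'0 \<open>a < x\<close> \<open>x < m\<close> am by simp
  ultimately have um: "u m = 0" using ab by simp
  have "u' m = 0" using u'0 am by simp
  then have "u s = 0" using scalar_unique[OF d1 d2 um] by blast
  with s show False by simp
qed



fun mpow :: "complex^'n^'n \<Rightarrow> nat \<Rightarrow> complex^'n^'n" where
  "mpow M 0 = mat 1"
| "mpow M (Suc k) = M ** mpow M k"

definition papp :: "complex^'n^'n \<Rightarrow> complex poly \<Rightarrow> complex^'n \<Rightarrow> complex^'n" where
  "papp M p v = (\<Sum>i\<le>degree p. coeff p i *s (mpow M i *v v))"

lemma papp_bound: "degree p \<le> n \<Longrightarrow> papp M p v = (\<Sum>i\<le>n. coeff p i *s (mpow M i *v v))"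
  unfolding papp_def by (rule sum.mono_neutral_left) (auto simp: coeff_eq_0)

lemma papp_add: "papp M (p + q) v = papp M p v + papp M q v"
proof -
  define n where "n = max (degree p) (degree q)"
  have "degree (p + q) \<le> n" unfolding n_def by (rule degree_add_le) auto
  moreover have "papp M p v = (\<Sum>i\<le>n. coeff p i *s (mpow M i *v v))"
    by (rule papp_bound) (simp add: n_def)
  moreover have "papp M q v = (\<Sum>i\<le>n. coeff q i *s (mpow M i *v v))"
    by (rule papp_bound) (simp add: n_def)
  ultimately show ?thesis
    by (simp add: papp_bound sum.distrib vector_sadd_rdistrib)
qed

lemma papp_zero[simp]: "papp M 0 v = 0"
  by (simp add: papp_def)

lemma smult_sum: "(c::'a::comm_ring_1) *s sum f A = sum (\<lambda>i. c *s f i) A"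
  by (induct A rule: infinite_finite_induct) (auto simp: vector_add_ldistrib)

lemma mv_sum: "(M::'a::comm_ring_1^'n^'m) *v sum f A = sum (\<lambda>i. M *v f i) A"
  by (induct A rule: infinite_finite_induct) (auto simp: matrix_vector_right_distrib)

lemma sum_mv: "(sum f A :: 'a::comm_ring_1^'n^'m) *v v = sum (\<lambda>i. f i *v v) A"
  by (induct A rule: infinite_finite_induct) (auto simp: matrix_vector_mult_add_rdistrib)

lemma papp_smult: "papp M (smult a p) v = a *s papp M p v"
  using papp_bound[of "smult a p" "degree p"]
  by (simp add: papp_def smult_sum vector_smult_assoc)

lemma papp_pCons: "papp M (pCons a p) v = a *s v + M *v papp M p v"
proof -
  have "papp M (pCons a p) v = (\<Sum>i\<le>Suc (degree p). coeff (pCons a p) i *s (mpow M i *v v))"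
    by (rule papp_bound) (simp add: degree_pCons_le)
  also have "\<dots> = a *s v + (\<Sum>i\<le>degree p. coeff p i *s (mpow M (Suc i) *v v))"
    by (subst sum.atMost_Suc_shift) simp
  also have "(\<Sum>i\<le>degree p. coeff p i *s (mpow M (Suc i) *v v)) = M *v papp M p v"
    by (simp add: papp_def mv_sum vector_scalar_commute matrix_vector_mul_assoc)
  finally show ?thesis .
qed

lemma papp_mult: "papp M (p * q) v = papp M p (papp M q v)"
proof (induct p)
  case 0
  then show ?case by simp
next
  case (pCons a p)
  then show ?case
    by (simp add: papp_add papp_smult papp_pCons)
qed

lemma if_smult: "(if P then (c::complex) else 0) *s x = (if P then c *s x else 0)"
  by simp

lemma papp_monom: "papp M (monom c n) v = c *s (mpow M n *v v)"
  using papp_bound[of "monom c n" n M v]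
  by (simp add: coeff_monom degree_monom_le if_smult)

lemma papp_sum: "papp M (sum p A) v = (\<Sum>i\<in>A. papp M (p i) v)"
  by (induct A rule: infinite_finite_induct) (auto simp: papp_add)

lemma papp_diff: "papp M (p - q) v = papp M p v - papp M q v"
  using papp_add[of M "p - q" q v] by simp

lemma ofreal_smult_mv: "(of_real c::complex) *s (B *v v) = (c *\<^sub>R B) *v v"
  by (simp add: vec_eq_iff matrix_vector_mult_def sum_distrib_left mult_ac scaleR_conv_of_real[where 'a=complex])

lemma annihilating:
  fixes M :: "complex^'n^'n"
  shows "\<exists>q::complex poly. q \<noteq> 0 \<and> (\<forall>v. papp M q v = 0)"
proof (cases "inj_on (mpow M) {..DIM(complex^'n^'n)}")
  case True
  define N where "N = DIM(complex^'n^'n)"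
  define S where "S = mpow M ` {..N}"
  have fin: "finite S" by (simp add: S_def)
  have "card S = Suc N" using True by (simp add: S_def N_def card_image)
  then have "dependent S" using dependent_biggerset[of S] fin by (simp add: N_def)
  then obtain u where u: "\<exists>v\<in>S. u v \<noteq> 0" "(\<Sum>v\<in>S. u v *\<^sub>R v) = 0"
    using dependent_finite[OF fin] by blast
  define q :: "complex poly" where "q = (\<Sum>i\<le>N. monom (of_real (u (mpow M i))) i)"
  have cq: "coeff q j = of_real (u (mpow M j))" if "j \<le> N" for j
    using that by (simp add: q_def coeff_sum coeff_monom)
  have "q \<noteq> 0"
  proof
    assume "q = 0"
    from u(1) obtain j where "j \<le> N" "u (mpow M j) \<noteq> 0" by (auto simp: S_def)
    with cq[of j] \<open>q = 0\<close> show False by simp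
  qed
  moreover have "papp M q v = 0" for v
  proof -
    have "papp M q v = (\<Sum>i\<le>N. (u (mpow M i) *\<^sub>R mpow M i) *v v)"
      by (simp add: q_def papp_sum papp_monom ofreal_smult_mv)
    also have "\<dots> = (\<Sum>B\<in>S. (u B *\<^sub>R B) *v v)"
      unfolding S_def using True by (simp add: sum.reindex N_def)
    also have "\<dots> = (\<Sum>B\<in>S. u B *\<^sub>R B) *v v" by (simp add: sum_mv)
    finally show ?thesis using u(2) by simp
  qed
  ultimately show ?thesis by blast
next
  case False
  then obtain i j where ij: "i \<noteq> j" "mpow M i = mpow M j"
    unfolding inj_on_def by blast
  define q where "q = monom (1::complex) i - monom 1 j"
  have "coeff q i = 1" using ij by (simp add: q_def coeff_monom)
  then have "q \<noteq> 0" by auto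
  moreover have "papp M q v = 0" for v
    using ij by (simp add: q_def papp_diff papp_monom)
  ultimately show ?thesis by blast
qed



definition csol :: "complex^'n^'n \<Rightarrow> (real \<Rightarrow> complex^'n) \<Rightarrow> bool" where
  "csol M x \<longleftrightarrow> (\<exists>x'. \<forall>t. (x has_vector_derivative x' t) (at t) \<and>
                                  (x' has_vector_derivative (M *v x t)) (at t))"

lemma csol_lin:
  assumes "csol M x" "bounded_linear L" "\<And>y. L (M *v y) = M *v L y"
  shows "csol M (\<lambda>t. L (x t))"
proof -
  from assms(1) obtain x' where x': "\<And>t. (x has_vector_derivative x' t) (at t)"
    "\<And>t. (x' has_vector_derivative (M *v x t)) (at t)" unfolding csol_def by blast
  have "((\<lambda>t. L (x t)) has_vector_derivative L (x' t)) (at t)" for t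
    by (rule bounded_linear.has_vector_derivative[OF assms(2) x'(1)])
  moreover have "((\<lambda>t. L (x' t)) has_vector_derivative M *v L (x t)) (at t)" for t
    using bounded_linear.has_vector_derivative[OF assms(2) x'(2)] assms(3) by simp
  ultimately show ?thesis unfolding csol_def by (intro exI[of _ "\<lambda>t. L (x' t)"]) blast
qed

lemma bl_shift: "bounded_linear (\<lambda>y::complex^'n. M *v y - z *s y)"
proof -
  have "linear (\<lambda>y::complex^'n. M *v y - z *s y)"
  proof (rule linearI)
    fix y1 y2 :: "complex^'n"
    show "M *v (y1 + y2) - z *s (y1 + y2) = (M *v y1 - z *s y1) + (M *v y2 - z *s y2)"
      by (simp add: matrix_vector_right_distrib vector_add_ldistrib)
  next
    fix c :: real and y :: "complex^'n"
    have "M *v (c *\<^sub>R y) = c *\<^sub>R (M *v y)"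
      using matrix_vector_mul_linear[of M] unfolding linear_iff by blast
    moreover have "z *s (c *\<^sub>R y) = c *\<^sub>R (z *s y)"
      by (simp add: vec_eq_iff scaleR_conv_of_real[where 'a=complex] mult_ac)
    ultimately show "M *v (c *\<^sub>R y) - z *s (c *\<^sub>R y) = c *\<^sub>R (M *v y - z *s y)"
      by (simp add: scaleR_diff_right)
  qed
  then show ?thesis by (simp add: linear_conv_bounded_linear)
qed

lemma eigen_case:
  fixes M :: "complex^'n^'n"
  assumes "csol M x" "a < b" "x a = 0" "x b = 0" "x s \<noteq> 0"
    and ev: "\<And>t. M *v x t = z *s x t"
  shows "Im z = 0 \<and> Re z < 0"
proof -
  from assms(1) obtain x' where x': "\<And>t. (x has_vector_derivative x' t) (at t)"
    "\<And>t. (x' has_vector_derivative (M *v x t)) (at t)" unfolding csol_def by blast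
  from \<open>x s \<noteq> 0\<close> obtain i where i: "x s $ i \<noteq> 0" by (auto simp: vec_eq_iff)
  have d1: "((\<lambda>t. x t $ i) has_vector_derivative x' t $ i) (at t)" for t
    by (rule bounded_linear.has_vector_derivative[OF bounded_linear_vec_nth x'(1)])
  have d2: "((\<lambda>t. x' t $ i) has_vector_derivative z * x t $ i) (at t)" for t
    using bounded_linear.has_vector_derivative[OF bounded_linear_vec_nth x'(2)] ev by simp
  show ?thesis
    by (rule scalar_conj[OF d1 d2 assms(2)]) (use assms i in auto)
qed

lemma descent:
  fixes M :: "complex^'n^'n"
  assumes ab: "a < b"
  shows "q \<noteq> 0 \<Longrightarrow> csol M x \<Longrightarrow> x a = 0 \<Longrightarrow> x b = 0 \<Longrightarrow> x s \<noteq> 0 \<Longrightarrow>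
    (\<forall>t. papp M q (x t) = 0) \<Longrightarrow> \<exists>l w. l < 0 \<and> w \<noteq> 0 \<and> M *v w = of_real l *s w"
proof (induct "degree q" arbitrary: q x s rule: less_induct)
  case less
  show ?case
  proof (cases "degree q = 0")
    case True
    then obtain c where q: "q = [:c:]" by (metis degree_eq_zeroE)
    with less.prems(1) have "c \<noteq> 0" by simp
    have "papp M q v = c *s v" for v using q by (simp add: papp_def)
    with less.prems(6) \<open>c \<noteq> 0\<close> have "x s = 0" by simp
    with less.prems(5) show ?thesis by simp
  next
    case False
    have "\<not> (\<exists>a l. a \<noteq> 0 \<and> l = 0 \<and> q = pCons a l)" using False by auto
    then obtain z where "poly q z = 0" using fundamental_theorem_of_algebra_alt by blast
    then obtain q' where q': "q = [:-z, 1:] * q'" using poly_eq_0_iff_dvd by (metis dvdE)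
    have "q' \<noteq> 0" using q' less.prems(1) by auto
    have "degree q = degree [:-z, 1:] + degree q'" unfolding q' by (rule degree_mult_eq) (use \<open>q' \<noteq> 0\<close> in auto)
    then have dq: "degree q' < degree q" by simp
    define L where "L y = M *v y - z *s y" for y
    have Lp: "papp M [:-z, 1:] y = L y" for y
      by (simp add: papp_pCons L_def vector_sub_rdistrib)
    have comm: "L (M *v y) = M *v L y" for y
      by (simp add: L_def matrix_vector_mult_diff_distrib vector_scalar_commute)
    show ?thesis
    proof (cases "\<forall>t. L (x t) = 0")
      case True
      then have "M *v x t = z *s x t" for t unfolding L_def by (metis eq_iff_diff_eq_0)
      from eigen_case[OF less.prems(2) ab less.prems(3,4,5) this]
      have "Im z = 0" "Re z < 0" by auto
      then have "z = of_real (Re z)" by (simp add: complex_eq_iff)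
      moreover have "M *v x s = z *s x s" by fact
      ultimately show ?thesis using less.prems(5) \<open>Re z < 0\<close> by metis
    next
      case False
      then obtain s' where s': "L (x s') \<noteq> 0" by blast
      have cs: "csol M (\<lambda>t. L (x t))"
        by (rule csol_lin[OF less.prems(2)]) (use bl_shift comm in \<open>auto simp: L_def[abs_def]\<close>)
      have "papp M q' (L (x t)) = 0" for t
      proof -
        have "q = q' * [:-z, 1:]" using q' by (simp add: mult.commute)
        then have "papp M q (x t) = papp M q' (L (x t))" by (simp only: papp_mult Lp)
        then show ?thesis using less.prems(6) by simp
      qed
      then show ?thesis
        using less.hyps[OF dq \<open>q' \<noteq> 0\<close> cs _ _ s'] less.prems(3,4) by (simp add: L_def)
    qed
  qed
qed



definition cx :: "real^'n \<Rightarrow> complex^'n" where "cx y = (\<chi> i. complex_of_real (y $ i))"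
definition cM :: "real^'n^'n \<Rightarrow> complex^'n^'n" where "cM A = (\<chi> i j. complex_of_real (A $ i $ j))"

lemma cx_mv: "cM A *v cx y = cx (A *v y)"
  by (simp add: vec_eq_iff matrix_vector_mult_def cM_def cx_def)

lemma bl_cx: "bounded_linear (cx :: real^'n \<Rightarrow> complex^'n)"
proof -
  have "linear (cx :: real^'n \<Rightarrow> complex^'n)"
    by (rule linearI) (simp_all add: vec_eq_iff cx_def scaleR_conv_of_real[where 'a=complex])
  then show ?thesis by (simp add: linear_conv_bounded_linear)
qed

lemma cx_eq_0: "cx y = 0 \<longleftrightarrow> y = 0"
  by (simp add: vec_eq_iff cx_def)

lemma forward:
  fixes A :: "real^'n^'n"
  assumes "conjugate A t0 t1"
  shows "\<exists>l. l < 0 \<and> real_eigenvalue A l"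
proof -
  from assms obtain v s where t: "t0 < t1" and sol: "is_solution A v" and vs: "v s \<noteq> 0"
    and v0: "v t0 = 0" "v t1 = 0" unfolding conjugate_def by blast
  from sol obtain v' where v': "\<And>t. (v has_vector_derivative v' t) (at t)"
    "\<And>t. (v' has_vector_derivative (A *v v t)) (at t)" unfolding is_solution_def by blast
  have cs: "csol (cM A) (\<lambda>t. cx (v t))"
    unfolding csol_def
    apply (rule exI[of _ "\<lambda>t. cx (v' t)"])
    using bounded_linear.has_vector_derivative[OF bl_cx v'(1)]
      bounded_linear.has_vector_derivative[OF bl_cx v'(2)] by (simp add: cx_mv)
  obtain q where q: "q \<noteq> 0" "\<forall>y. papp (cM A) q y = 0" using annihilating by blast
  obtain l w where lw: "l < 0" "w \<noteq> 0" "cM A *v w = of_real l *s w"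
    using descent[OF t q(1) cs, of s] q(2) v0 vs by (auto simp: cx_eq_0 cx_def vec_eq_iff)
  define re where "re = (\<chi> i. Re (w $ i))"
  define im where "im = (\<chi> i. Im (w $ i))"
  have comp: "(\<Sum>j\<in>UNIV. complex_of_real (A $ i $ j) * w $ j) = of_real l * w $ i" for i
    using lw(3) by (simp add: vec_eq_iff matrix_vector_mult_def cM_def)
  have "A *v re = l *\<^sub>R re"
  proof -
    have "(\<Sum>j\<in>UNIV. A $ i $ j * Re (w $ j)) = l * Re (w $ i)" for i
      using arg_cong[OF comp[of i], of Re] by (simp add: Re_sum)
    then show ?thesis by (simp add: vec_eq_iff matrix_vector_mult_def re_def)
  qed
  moreover have "A *v im = l *\<^sub>R im"
  proof -
    have "(\<Sum>j\<in>UNIV. A $ i $ j * Im (w $ j)) = l * Im (w $ i)" for i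
      using arg_cong[OF comp[of i], of Im] by (simp add: Im_sum)
    then show ?thesis by (simp add: vec_eq_iff matrix_vector_mult_def im_def)
  qed
  moreover have "re \<noteq> 0 \<or> im \<noteq> 0"
    using lw(2) by (auto simp: vec_eq_iff re_def im_def complex_eq_iff)
  ultimately show ?thesis using lw(1) unfolding real_eigenvalue_def by blast
qed

lemma backward:
  fixes A :: "real^'n^'n"
  assumes "l < 0" "real_eigenvalue A l"
  shows "\<exists>t0 t1. t0 < t1 \<and> conjugate A t0 t1"
proof -
  from assms(2) obtain x where x: "x \<noteq> 0" "A *v x = l *\<^sub>R x" unfolding real_eigenvalue_def by blast
  define w where "w = sqrt (- l)"
  have w: "w > 0" "w * w = - l" using assms(1) by (auto simp: w_def)
  define v where "v t = sin (w * t) *\<^sub>R x" for t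
  have d1: "(v has_vector_derivative (w * cos (w * t)) *\<^sub>R x) (at t)" for t
  proof -
    have "((\<lambda>t. sin (w * t)) has_real_derivative w * cos (w * t)) (at t)"
      by (auto intro!: derivative_eq_intros)
    from has_vector_derivative_scaleR[OF this has_vector_derivative_const[of x]]
    show ?thesis by (simp add: v_def[abs_def])
  qed
  have d2: "((\<lambda>t. (w * cos (w * t)) *\<^sub>R x) has_vector_derivative A *v v t) (at t)" for t
  proof -
    have "((\<lambda>t. w * cos (w * t)) has_real_derivative - (w * w) * sin (w * t)) (at t)"
      by (auto intro!: derivative_eq_intros)
    from has_vector_derivative_scaleR[OF this has_vector_derivative_const[of x]]
    show ?thesis using w(2) x(2) by (simp add: v_def matrix_vector_mult_scaleR mult.commute)
  qed
  have sol: "is_solution A v" unfolding is_solution_def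
    by (rule exI[of _ "\<lambda>t. (w * cos (w * t)) *\<^sub>R x"]) (use d1 d2 in blast)
  have "v (pi / w / 2) = x" using w(1) by (simp add: v_def)
  moreover have "v 0 = 0" "v (pi / w) = 0" using w(1) by (simp_all add: v_def)
  ultimately have "conjugate A 0 (pi / w)"
    unfolding conjugate_def using sol x(1) w(1) by (metis divide_pos_pos pi_gt_zero)
  then show ?thesis using w(1) by (metis divide_pos_pos pi_gt_zero)
qed

theorem lemma3p4:
  fixes A :: "real^'n^'n"
  shows "(\<exists>t0 t1. t0 < t1 \<and> conjugate A t0 t1) \<longleftrightarrow> (\<exists>l. l < 0 \<and> real_eigenvalue A l)"
  using forward backward by blast


end
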